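(* Let $\Lambda,\Theta$ be Young functions with $\Lambda<\Theta$, and let $h\in L^1(\mathbb{R}^N)\cap L^\infty(\mathbb{R}^N)$. Then there exists $C=C(\Lambda,\Theta,\|h\|_1,\|h\|_\infty)>0$ such that $\|hu\|_\Lambda\le C\|u\|_\Theta$ for all $u\in L^\Theta(\mathbb{R}^N)$.
   Context: A Young function is a convex $\Lambda:[0,\infty)\to[0,\infty)$ with $\Lambda(t)=0$ iff $t=0$, $\lim_{t\to0^+}\Lambda(t)/t=0$ and $\lim_{t\to\infty}\Lambda(t)/t=\infty$. $\Lambda<\Theta$ means there exist $c,T>0$ with $\Lambda(t)\le\Theta(ct)$ for all $t\ge T$. $\|\cdot\|_\Lambda$ is the Luxemburg norm $\|u\|_\Lambda=\inf\{\tau>0:\int_{\mathbb{R}^N}\Lambda(|u|/\tau)\,dx\le1\}$ and $L^\Lambda(\mathbb{R}^N)$ the corresponding Orlicz space. *)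

theory Defs
  imports "HOL-Analysis.Analysis"
begin

definition young_function :: "(real \<Rightarrow> real) \<Rightarrow> bool" where
  "young_function \<Lambda> \<longleftrightarrow>
     convex_on {0..} \<Lambda> \<and>
     (\<forall>t\<ge>0. \<Lambda> t \<ge> 0) \<and>
     (\<forall>t\<ge>0. \<Lambda> t = 0 \<longleftrightarrow> t = 0) \<and>
     ((\<lambda>t. \<Lambda> t / t) \<longlongrightarrow> 0) (at_right 0) \<and>
     filterlim (\<lambda>t. \<Lambda> t / t) at_top at_top"

definition young_less :: "(real \<Rightarrow> real) \<Rightarrow> (real \<Rightarrow> real) \<Rightarrow> bool" where
  "young_less \<Lambda> \<Theta> \<longleftrightarrow> (\<exists>c>0. \<exists>T>0. \<forall>t\<ge>T. \<Lambda> t \<le> \<Theta> (c * t))"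

definition orlicz_modular :: "(real \<Rightarrow> real) \<Rightarrow> ('a::euclidean_space \<Rightarrow> real) \<Rightarrow> real \<Rightarrow> ennreal" where
  "orlicz_modular \<Lambda> u \<tau> = (\<integral>\<^sup>+ x. ennreal (\<Lambda> (\<bar>u x\<bar> / \<tau>)) \<partial>lebesgue)"

definition luxemburg_norm :: "(real \<Rightarrow> real) \<Rightarrow> ('a::euclidean_space \<Rightarrow> real) \<Rightarrow> real" where
  "luxemburg_norm \<Lambda> u = Inf {\<tau>. \<tau> > 0 \<and> orlicz_modular \<Lambda> u \<tau> \<le> 1}"

definition orlicz_space :: "(real \<Rightarrow> real) \<Rightarrow> ('a::euclidean_space \<Rightarrow> real) set" where
  "orlicz_space \<Lambda> = {u. u \<in> borel_measurable lebesgue \<and> (\<exists>\<tau>>0. orlicz_modular \<Lambda> u \<tau> < \<infinity>)}"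

definition Linf_space :: "('a::euclidean_space \<Rightarrow> real) set" where
  "Linf_space = {h. h \<in> borel_measurable lebesgue \<and> (\<exists>B. AE x in lebesgue. \<bar>h x\<bar> \<le> B)}"

definition Linf_norm :: "('a::euclidean_space \<Rightarrow> real) \<Rightarrow> real" where
  "Linf_norm h = Inf {B. B \<ge> 0 \<and> (AE x in lebesgue. \<bar>h x\<bar> \<le> B)}"

definition L1_norm :: "('a::euclidean_space \<Rightarrow> real) \<Rightarrow> real" where
  "L1_norm h = (\<integral>x. \<bar>h x\<bar> \<partial>lebesgue)"

end

theory Submission
  imports Defs
begin


lemma yf_basic:
  assumes "young_function F"
  shows "F 0 = 0" "\<And>t. t \<ge> 0 \<Longrightarrow> F t \<ge> 0" "\<And>t. t > 0 \<Longrightarrow> F t > 0"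
  using assms unfolding young_function_def by (auto simp: less_le)

lemma yf_scale:
  assumes "young_function F" "0 \<le> l" "l \<le> 1" "0 \<le> x"
  shows "F (l * x) \<le> l * F x"
proof -
  have c: "convex_on {0..} F" using assms(1) unfolding young_function_def by blast
  have "F ((1 - l) *\<^sub>R 0 + l *\<^sub>R x) \<le> (1 - l) * F 0 + l * F x"
    by (rule convex_onD[OF c]) (use assms in auto)
  thus ?thesis using yf_basic(1)[OF assms(1)] by simp
qed

lemma yf_mono:
  assumes "young_function F" "0 \<le> x" "x \<le> y"
  shows "F x \<le> F y"
proof (cases "y = 0")
  case True thus ?thesis using assms by simp
next
  case False
  hence y: "y > 0" using assms by simp
  have "F ((x/y) * y) \<le> (x/y) * F y"
    by (rule yf_scale) (use assms y in auto)
  also have "\<dots> \<le> F y"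
  proof -
    have "x * F y \<le> y * F y" using yf_basic(2)[OF assms(1), of y] y assms by (simp add: mult_right_mono)
    thus ?thesis using y by (simp add: divide_le_eq mult.commute)
  qed
  finally show ?thesis using y by simp
qed

lemma yf_lin:
  assumes "young_function F" "1 \<le> v"
  shows "F 1 * v \<le> F v"
proof -
  have "F ((1/v) * v) \<le> (1/v) * F v"
    by (rule yf_scale) (use assms in auto)
  thus ?thesis using assms(2) by (simp add: field_simps)
qed

lemma yf_meas:
  assumes "young_function F" "f \<in> borel_measurable M" "\<And>x. f x \<ge> 0"
  shows "(\<lambda>x. F (f x)) \<in> borel_measurable M"
proof -
  have "mono (\<lambda>t. F (max 0 t))"
    by (rule monoI) (auto intro: yf_mono[OF assms(1)])
  hence m: "(\<lambda>t. F (max 0 t)) \<in> borel_measurable borel" by (rule borel_measurable_mono)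
  have "(\<lambda>x. F (max 0 (f x))) \<in> borel_measurable M"
    using measurable_compose[OF assms(2) m] by (simp add: o_def)
  moreover have "(\<lambda>x. F (max 0 (f x))) = (\<lambda>x. F (f x))" using assms(3) by (simp add: max_def)
  ultimately show ?thesis by simp
qed

lemma linf_ae:
  fixes h :: "'a::euclidean_space \<Rightarrow> real"
  assumes "h \<in> Linf_space"
  shows "AE x in lebesgue. \<bar>h x\<bar> \<le> Linf_norm h" "Linf_norm h \<ge> 0"
proof -
  let ?S = "{B. B \<ge> 0 \<and> (AE x in lebesgue. \<bar>h x\<bar> \<le> B)}"
  obtain B where B: "AE x in lebesgue. \<bar>h x\<bar> \<le> B" using assms unfolding Linf_space_def by blast
  have "max B 0 \<in> ?S" using B by (auto elim: eventually_mono)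
  hence ne: "?S \<noteq> {}" by blast
  have bdd: "bdd_below ?S" by (rule bdd_belowI[of _ 0]) auto
  show "Linf_norm h \<ge> 0" unfolding Linf_norm_def using ne by (auto intro: cInf_greatest)
  have "\<forall>n. AE x in lebesgue. \<bar>h x\<bar> \<le> Linf_norm h + inverse (real (Suc n))"
  proof
    fix n
    have "Inf ?S < Linf_norm h + inverse (real (Suc n))" unfolding Linf_norm_def by simp
    then obtain b where "b \<in> ?S" "b < Linf_norm h + inverse (real (Suc n))"
      using cInf_lessD[OF ne] by blast
    thus "AE x in lebesgue. \<bar>h x\<bar> \<le> Linf_norm h + inverse (real (Suc n))" by (auto elim: eventually_mono)
  qed
  hence "AE x in lebesgue. \<forall>n. \<bar>h x\<bar> \<le> Linf_norm h + inverse (real (Suc n))"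
    by (simp add: AE_all_countable)
  thus "AE x in lebesgue. \<bar>h x\<bar> \<le> Linf_norm h"
  proof (rule eventually_mono)
    fix x assume a: "\<forall>n. \<bar>h x\<bar> \<le> Linf_norm h + inverse (real (Suc n))"
    show "\<bar>h x\<bar> \<le> Linf_norm h"
    proof (rule ccontr)
      assume "\<not> ?thesis"
      then obtain n where "inverse (real (Suc n)) < \<bar>h x\<bar> - Linf_norm h"
        using reals_Archimedean[of "\<bar>h x\<bar> - Linf_norm h"] by auto
      thus False using a[rule_format, of n] by simp
    qed
  qed
qed


lemma yl_point:
  assumes L: "young_function L" and Th: "young_function Th" and c: "c > 0" and T: "T > 0"
    and lt: "\<forall>t\<ge>T. L t \<le> Th (c * t)" and t: "t \<ge> 0"
  shows "L t \<le> Th (c * t) + (L T / T) * t"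
proof (cases "t \<ge> T")
  case True
  have "0 \<le> L T / T * t" using yf_basic(2)[OF L, of T] T t by simp
  thus ?thesis using lt True by force
next
  case False
  have "L ((t/T) * T) \<le> (t/T) * L T" by (rule yf_scale[OF L]) (use False T t in auto)
  hence "L t \<le> (t/T) * L T" using T by simp
  moreover have "0 \<le> Th (c * t)" using yf_basic(2)[OF Th] c t by simp
  moreover have "t / T * L T = L T / T * t" by simp
  moreover have "t / T * T = t" using T by simp
  ultimately show ?thesis using T by linarith
qed

lemma modular_mono:
  assumes F: "young_function F" and "0 < s" "s \<le> t"
  shows "orlicz_modular F u t \<le> orlicz_modular F u s"
  unfolding orlicz_modular_def
proof (rule nn_integral_mono)
  fix x
  have "\<bar>u x\<bar> / t \<le> \<bar>u x\<bar> / s" using assms by (simp add: frac_le)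
  thus "ennreal (F (\<bar>u x\<bar> / t)) \<le> ennreal (F (\<bar>u x\<bar> / s))"
    using yf_mono[OF F] assms by (intro ennreal_leI) simp
qed

lemma modular_set_ne:
  fixes u :: "'a::euclidean_space \<Rightarrow> real"
  assumes F: "young_function F" and u: "u \<in> orlicz_space F"
  shows "\<exists>t>0. orlicz_modular F u t \<le> 1"
proof -
  obtain t0 where t0: "t0 > 0" "orlicz_modular F u t0 < \<infinity>" and um: "u \<in> borel_measurable lebesgue"
    using u unfolding orlicz_space_def by blast
  define m where "m = enn2real (orlicz_modular F u t0)"
  have mm: "orlicz_modular F u t0 = ennreal m" unfolding m_def using t0(2)
    by (simp add: less_top ennreal_enn2real)
  define K where "K = max 1 m"
  have K: "K \<ge> 1" "m \<le> K" unfolding K_def by auto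
  have meas: "(\<lambda>x. F (\<bar>u x\<bar> / t0)) \<in> borel_measurable lebesgue"
    by (rule yf_meas[OF F]) (use um t0 in auto)
  have "orlicz_modular F u (t0 * K) = (\<integral>\<^sup>+ x. ennreal (F ((1/K) * (\<bar>u x\<bar> / t0))) \<partial>lebesgue)"
    unfolding orlicz_modular_def by (simp add: field_simps)
  also have "\<dots> \<le> (\<integral>\<^sup>+ x. ennreal (1/K) * ennreal (F (\<bar>u x\<bar> / t0)) \<partial>lebesgue)"
  proof (rule nn_integral_mono)
    fix x
    have "F ((1/K) * (\<bar>u x\<bar> / t0)) \<le> (1/K) * F (\<bar>u x\<bar> / t0)"
      by (rule yf_scale[OF F]) (use K t0 in auto)
    moreover have "ennreal (1/K) * ennreal (F (\<bar>u x\<bar> / t0)) = ennreal ((1/K) * F (\<bar>u x\<bar> / t0))"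
      using K yf_basic(2)[OF F, of "\<bar>u x\<bar> / t0"] t0 by (intro ennreal_mult[symmetric]) auto
    ultimately show "ennreal (F ((1/K) * (\<bar>u x\<bar> / t0))) \<le> ennreal (1/K) * ennreal (F (\<bar>u x\<bar> / t0))"
      by (simp add: ennreal_leI)
  qed
  also have "\<dots> = ennreal (1/K) * orlicz_modular F u t0"
    unfolding orlicz_modular_def by (rule nn_integral_cmult) (use meas in measurable)
  also have "\<dots> = ennreal (m / K)"
  proof -
    have "m \<ge> 0" unfolding m_def by simp
    have "ennreal (1/K) * ennreal m = ennreal (1/K * m)"
      by (rule ennreal_mult[symmetric]) (use K \<open>m \<ge> 0\<close> in auto)
    thus ?thesis using mm by simp
  qed
  also have "\<dots> \<le> 1" using K by simp
  finally show ?thesis using t0 K by (intro exI[of _ "t0 * K"]) auto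
qed


lemma hv_bound:
  assumes Th: "young_function Th" and hx: "0 \<le> hx" "hx \<le> M" and v: "0 \<le> v"
  shows "hx * v \<le> hx + M * Th v / Th 1"
proof (cases "v \<le> 1")
  case True
  have "hx * v \<le> hx" using True hx v by (simp add: mult_left_le)
  moreover have "0 \<le> M * Th v / Th 1" using yf_basic[OF Th] hx v by simp
  ultimately show ?thesis by linarith
next
  case False
  have t1: "Th 1 > 0" using yf_basic(3)[OF Th] by simp
  have "Th 1 * v \<le> Th v" using yf_lin[OF Th] False by simp
  hence "v \<le> Th v / Th 1" using t1 by (simp add: field_simps)
  hence "hx * v \<le> M * (Th v / Th 1)" using hx v by (meson mult_mono order_trans)
  thus ?thesis using hx by simp
qed

lemma main_bound:
  fixes h u :: "'a::euclidean_space \<Rightarrow> real"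
  assumes L: "young_function L" and Th: "young_function Th" and c: "c > 0" and T: "T > 0"
    and lt: "\<forall>t\<ge>T. L t \<le> Th (c * t)"
    and hi: "integrable lebesgue h" and hM: "AE x in lebesgue. \<bar>h x\<bar> \<le> M" and M: "M \<ge> 0"
    and um: "u \<in> borel_measurable lebesgue" and s: "\<sigma> > 0" and us: "orlicz_modular Th u \<sigma> \<le> 1"
    and C: "C = 2 * (c * M + (L T / T) * M / Th 1) + 2 * (L T / T) * L1_norm h + 1"
  shows "orlicz_modular L (\<lambda>x. h x * u x) (C * \<sigma>) \<le> 1"
proof -
  define a where "a = L T / T"
  define A where "A = L1_norm h"
  have a: "a \<ge> 0" unfolding a_def using yf_basic(2)[OF L, of T] T by simp
  have A: "A \<ge> 0" unfolding A_def L1_norm_def by simp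
  have t1: "Th 1 > 0" using yf_basic(3)[OF Th] by simp
  have C': "C = 2 * (c * M + a * M / Th 1) + 2 * a * A + 1" using C unfolding a_def A_def by simp
  have n1: "0 \<le> c * M" "0 \<le> a * M / Th 1" "0 \<le> 2 * a * A" using a A M t1 c by auto
  have Cpos: "C > 0" using C' n1 by (smt (verit))
  define al where "al = (c * M + a * M / Th 1) / C"
  define be where "be = a / C"
  have al: "0 \<le> al" "al \<le> 1/2" unfolding al_def using Cpos C' a A M t1 c by (auto simp: field_simps)
  have aAC: "2 * a * A \<le> C" using C' n1 by (smt (verit))
  have be0: "0 \<le> be" unfolding be_def using Cpos a by simp
  have "2 * a * A / C \<le> 1" using aAC Cpos by (simp add: pos_divide_le_eq)
  moreover have "be * A = (2 * a * A / C) / 2" unfolding be_def by simp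
  ultimately have "be * A \<le> 1/2" by (metis divide_right_mono zero_le_numeral)
  note be = be0 this
  define v where "v x = \<bar>u x\<bar> / \<sigma>" for x
  have v0: "v x \<ge> 0" for x unfolding v_def using s by simp
  have pt: "L (\<bar>h x * u x\<bar> / (C * \<sigma>)) \<le> al * Th (v x) + be * \<bar>h x\<bar>" if hx: "\<bar>h x\<bar> \<le> M" for x
  proof -
    define w where "w = \<bar>h x\<bar> * v x / C"
    have eq: "\<bar>h x * u x\<bar> / (C * \<sigma>) = w" unfolding w_def v_def by (simp add: abs_mult)
    have w0: "w \<ge> 0" unfolding w_def using v0 Cpos by simp
    have "L w \<le> Th (c * w) + a * w" using yl_point[OF L Th c T lt w0] unfolding a_def by simp
    moreover have "Th (c * w) \<le> (c * M / C) * Th (v x)"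
    proof -
      have "c * \<bar>h x\<bar> \<le> c * M" using hx c by simp
      also have "c * M \<le> C" using C' n1 by (smt (verit))
      finally have l1: "c * \<bar>h x\<bar> / C \<le> 1" using Cpos by (simp add: pos_divide_le_eq)
      have "Th ((c * \<bar>h x\<bar> / C) * v x) \<le> (c * \<bar>h x\<bar> / C) * Th (v x)"
        by (rule yf_scale[OF Th]) (use l1 c Cpos v0 in auto)
      also have "\<dots> \<le> (c * M / C) * Th (v x)"
        using yf_basic(2)[OF Th v0] hx c Cpos by (intro mult_right_mono divide_right_mono) auto
      moreover have "c * w = (c * \<bar>h x\<bar> / C) * v x" unfolding w_def by simp
      ultimately show ?thesis by simp
    qed
    moreover have "a * w \<le> (a / C) * (\<bar>h x\<bar> + M * Th (v x) / Th 1)"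
    proof -
      have "\<bar>h x\<bar> * v x \<le> \<bar>h x\<bar> + M * Th (v x) / Th 1" by (rule hv_bound[OF Th _ hx v0]) simp
      hence "(a / C) * (\<bar>h x\<bar> * v x) \<le> (a / C) * (\<bar>h x\<bar> + M * Th (v x) / Th 1)"
        using a Cpos by (intro mult_left_mono) auto
      moreover have "a * w = (a / C) * (\<bar>h x\<bar> * v x)" unfolding w_def by simp
      ultimately show ?thesis by simp
    qed
    ultimately have "L w \<le> (c * M / C) * Th (v x) + (a / C) * (\<bar>h x\<bar> + M * Th (v x) / Th 1)" by linarith
    also have "\<dots> = al * Th (v x) + be * \<bar>h x\<bar>" unfolding al_def be_def using Cpos t1 by (simp add: field_simps)
    finally show ?thesis using eq by simp
  qed
  have thmeas: "(\<lambda>x. Th (v x)) \<in> borel_measurable lebesgue"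
    by (rule yf_meas[OF Th]) (use um v0 in \<open>auto simp: v_def\<close>)
  have hm: "h \<in> borel_measurable lebesgue" using hi by auto
  have "orlicz_modular L (\<lambda>x. h x * u x) (C * \<sigma>) \<le>
      (\<integral>\<^sup>+ x. ennreal al * ennreal (Th (v x)) + ennreal be * ennreal \<bar>h x\<bar> \<partial>lebesgue)"
    unfolding orlicz_modular_def
  proof (rule nn_integral_mono_AE)
    show "AE x in lebesgue. ennreal (L (\<bar>h x * u x\<bar> / (C * \<sigma>))) \<le> ennreal al * ennreal (Th (v x)) + ennreal be * ennreal \<bar>h x\<bar>"
      using hM
    proof (rule eventually_mono)
      fix x assume hx: "\<bar>h x\<bar> \<le> M"
      have "ennreal (L (\<bar>h x * u x\<bar> / (C * \<sigma>))) \<le> ennreal (al * Th (v x) + be * \<bar>h x\<bar>)"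
        using pt[OF hx] by (rule ennreal_leI)
      also have "\<dots> = ennreal al * ennreal (Th (v x)) + ennreal be * ennreal \<bar>h x\<bar>"
        using al be yf_basic(2)[OF Th v0] by (simp add: ennreal_plus ennreal_mult)
      finally show "ennreal (L (\<bar>h x * u x\<bar> / (C * \<sigma>))) \<le> ennreal al * ennreal (Th (v x)) + ennreal be * ennreal \<bar>h x\<bar>" .
    qed
  qed
  also have "\<dots> = ennreal al * (\<integral>\<^sup>+ x. ennreal (Th (v x)) \<partial>lebesgue) + ennreal be * (\<integral>\<^sup>+ x. ennreal \<bar>h x\<bar> \<partial>lebesgue)"
    using thmeas hm by (subst nn_integral_add) (auto simp: nn_integral_cmult)
  also have "(\<integral>\<^sup>+ x. ennreal (Th (v x)) \<partial>lebesgue) = orlicz_modular Th u \<sigma>"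
    unfolding orlicz_modular_def v_def ..
  also have "(\<integral>\<^sup>+ x. ennreal \<bar>h x\<bar> \<partial>lebesgue) = ennreal A"
    unfolding A_def L1_norm_def using hi by (intro nn_integral_eq_integral) auto
  also have "ennreal al * orlicz_modular Th u \<sigma> + ennreal be * ennreal A \<le> ennreal al * 1 + ennreal be * ennreal A"
    using us by (intro add_mono mult_left_mono) auto
  also have "\<dots> = ennreal (al + be * A)" using al be A by (simp add: ennreal_plus ennreal_mult)
  also have "\<dots> \<le> 1" using al be by simp
  finally show ?thesis .
qed


theorem proposition2p15:
  fixes \<Lambda> \<Theta> :: "real \<Rightarrow> real"
  assumes "young_function \<Lambda>" and "young_function \<Theta>" and "young_less \<Lambda> \<Theta>"
  shows "\<exists>C :: real \<Rightarrow> real \<Rightarrow> real.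
           \<forall>h :: 'a::euclidean_space \<Rightarrow> real.
             integrable lebesgue h \<and> h \<in> Linf_space \<longrightarrow>
             C (L1_norm h) (Linf_norm h) > 0 \<and>
             (\<forall>u \<in> orlicz_space \<Theta>.
                (\<lambda>x. h x * u x) \<in> orlicz_space \<Lambda> \<and>
                luxemburg_norm \<Lambda> (\<lambda>x. h x * u x)
                  \<le> C (L1_norm h) (Linf_norm h) * luxemburg_norm \<Theta> u)"
proof -
  note L = assms(1) and Th = assms(2)
  obtain c T where c: "c > 0" and T: "T > 0" and lt: "\<forall>t\<ge>T. \<Lambda> t \<le> \<Theta> (c * t)"
    using assms(3) unfolding young_less_def by blast
  define C where "C A M = 2 * (c * \<bar>M\<bar> + (\<Lambda> T / T) * \<bar>M\<bar> / \<Theta> 1) + 2 * (\<Lambda> T / T) * \<bar>A\<bar> + 1" for A M :: real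
  have a: "\<Lambda> T / T \<ge> 0" using yf_basic(2)[OF L, of T] T by simp
  have t1: "\<Theta> 1 > 0" using yf_basic(3)[OF Th] by simp
  show ?thesis
  proof (rule exI[of _ C], intro allI impI conjI ballI)
    fix h :: "'a \<Rightarrow> real"
    assume hh: "integrable lebesgue h \<and> h \<in> Linf_space"
    hence hi: "integrable lebesgue h" and hl: "h \<in> Linf_space" by auto
    define M where "M = Linf_norm h"
    define A where "A = L1_norm h"
    have M: "M \<ge> 0" "AE x in lebesgue. \<bar>h x\<bar> \<le> M" using linf_ae[OF hl] unfolding M_def by auto
    have A: "A \<ge> 0" unfolding A_def L1_norm_def by simp
    have n1: "0 \<le> c * \<bar>M\<bar>" "0 \<le> (\<Lambda> T / T) * \<bar>M\<bar> / \<Theta> 1" "0 \<le> 2 * (\<Lambda> T / T) * \<bar>A\<bar>"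
      using a t1 c T yf_basic(2)[OF L, of T] by auto
    have Cpos: "C A M > 0" unfolding C_def using n1 by (smt (verit))
    thus "C (L1_norm h) (Linf_norm h) > 0" unfolding A_def M_def .
    have CC: "C A M = 2 * (c * M + (\<Lambda> T / T) * M / \<Theta> 1) + 2 * (\<Lambda> T / T) * L1_norm h + 1"
      unfolding C_def A_def using M A unfolding A_def by simp
    fix u :: "'a \<Rightarrow> real" assume u: "u \<in> orlicz_space \<Theta>"
    have um: "u \<in> borel_measurable lebesgue" using u unfolding orlicz_space_def by blast
    let ?S = "{\<tau>. \<tau> > 0 \<and> orlicz_modular \<Theta> u \<tau> \<le> 1}"
    let ?SL = "{\<tau>. \<tau> > 0 \<and> orlicz_modular \<Lambda> (\<lambda>x. h x * u x) \<tau> \<le> 1}"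
    have ne: "?S \<noteq> {}" using modular_set_ne[OF Th u] by blast
    define s where "s = luxemburg_norm \<Theta> u"
    have s0: "s \<ge> 0" unfolding s_def luxemburg_norm_def using ne by (auto intro: cInf_greatest)
    have key: "C A M * \<sigma> \<in> ?SL" if sg: "\<sigma> > s" for \<sigma>
    proof -
      obtain \<tau> where tS: "\<tau> \<in> ?S" "\<tau> < \<sigma>"
        using cInf_lessD[OF ne, of \<sigma>] sg unfolding s_def luxemburg_norm_def by blast
      have sp: "\<sigma> > 0" using tS by auto
      have "orlicz_modular \<Theta> u \<sigma> \<le> orlicz_modular \<Theta> u \<tau>"
        by (rule modular_mono[OF Th]) (use tS in auto)
      also have "\<dots> \<le> 1" using tS by auto
      finally have "orlicz_modular \<Lambda> (\<lambda>x. h x * u x) (C A M * \<sigma>) \<le> 1"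
        using main_bound[OF L Th c T lt hi M(2) M(1) um sp _ CC] by blast
      thus ?thesis using Cpos sp by simp
    qed
    have k1: "C A M * (s + 1) \<in> ?SL" using key[of "s+1"] by simp
    have hum: "(\<lambda>x. h x * u x) \<in> borel_measurable lebesgue" using hi um by auto
    show "(\<lambda>x. h x * u x) \<in> orlicz_space \<Lambda>"
    proof -
      have "orlicz_modular \<Lambda> (\<lambda>x. h x * u x) (C A M * (s + 1)) < \<infinity>"
        using k1 by (simp add: le_less_trans[of _ 1])
      thus ?thesis using k1 hum unfolding orlicz_space_def by blast
    qed
    have "luxemburg_norm \<Lambda> (\<lambda>x. h x * u x) / C A M \<le> s"
    proof (rule dense_ge)
      fix \<sigma> assume "s < \<sigma>"
      hence "luxemburg_norm \<Lambda> (\<lambda>x. h x * u x) \<le> C A M * \<sigma>"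
        unfolding luxemburg_norm_def using key
        by (intro cInf_lower) (blast, rule bdd_belowI[of _ 0], simp)
      thus "luxemburg_norm \<Lambda> (\<lambda>x. h x * u x) / C A M \<le> \<sigma>" using Cpos
        by (simp add: pos_divide_le_eq mult.commute)
    qed
    thus "luxemburg_norm \<Lambda> (\<lambda>x. h x * u x) \<le> C (L1_norm h) (Linf_norm h) * luxemburg_norm \<Theta> u"
      using Cpos unfolding A_def M_def s_def by (simp add: pos_divide_le_eq mult.commute)
  qed
qed

end
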